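(* Let $q\in X^*\setminus\{e\}$ and let $\lambda_q$ be the largest positive real root of $\mathfrak{p}_q(t):=t^{|q|}-\sum_{v\in\sqrt[*]{P_q}}t^{|q|-|v|}$. There exist a constant $c_{q,1}>0$ and an $\omega$-word $\xi\in P_q^\omega$ (i.e. $\xi$ is quasiperiodic with quasiperiod $q$) such that $f(\xi,n)\ge c_{q,1}\lambda_q^n$ for all $n\in\mathbb{N}$.
   Context: $X$ is a finite alphabet with $|X|\ge2$; $X^*$ the finite words (empty word $e$), $X^\omega$ the infinite words, $X^n$ the words of length $n$. $w\sqsubseteq\eta$ means $w$ is a prefix of $\eta$, $w\sqsubset\eta$ a proper prefix. For a language $L$, $L^\omega:=\{w_1w_2\cdots: w_i\in L\setminus\{e\}\}$. An $\omega$-word $\xi$ is quasiperiodic with quasiperiod $q$ if for every $j\in\mathbb{N}$ there is a prefix $u_j\sqsubseteq\xi$ with $j-|q|<|u_j|\le j$ and $u_j\cdot q\sqsubseteq\xi$; these are exactly the elements of $P_q^\omega$. $f(\xi,n):=|\mathrm{infix}(\xi)\cap X^n|$ is the number of distinct factors of $\xi$ of length $n$. $P_q:=\{v: e\sqsubset v\sqsubseteq q\sqsubset v\cdot q\}$, and $\sqrt[*]{P_q}:=P_q\setminus(P_q^2\cdot P_q^* )$. *)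

theory Defs
  imports Complex_Main "HOL-Library.Sublist"
begin

definition oprefix :: "'a list \<Rightarrow> (nat \<Rightarrow> 'a) \<Rightarrow> bool" where
  "oprefix w \<xi> \<longleftrightarrow> (\<forall>i<length w. w ! i = \<xi> i)"

definition omega_lang :: "'a list set \<Rightarrow> (nat \<Rightarrow> 'a) set" where
  "omega_lang L = {\<xi>. \<exists>ws :: nat \<Rightarrow> 'a list. (\<forall>i. ws i \<in> L - {[]}) \<and>
      (\<forall>n. oprefix (concat (map ws [0..<n])) \<xi>)}"

definition Pq :: "'a list \<Rightarrow> 'a list set" where
  "Pq q = {v. v \<noteq> [] \<and> prefix v q \<and> strict_prefix q (v @ q)}"

definition lang_pow_ge2 :: "'a list set \<Rightarrow> 'a list set" where
  "lang_pow_ge2 L = {concat vs | vs. length vs \<ge> 2 \<and> set vs \<subseteq> L}"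

definition root_Pq :: "'a list \<Rightarrow> 'a list set" where
  "root_Pq q = Pq q - lang_pow_ge2 (Pq q)"

definition char_poly_q :: "'a list \<Rightarrow> real \<Rightarrow> real" where
  "char_poly_q q t = t ^ length q - (\<Sum>v\<in>root_Pq q. t ^ (length q - length v))"

definition factors :: "(nat \<Rightarrow> 'a) \<Rightarrow> nat \<Rightarrow> 'a list set" where
  "factors \<xi> n = {map \<xi> [i..<i+n] | i. True}"

definition fcompl :: "(nat \<Rightarrow> 'a) \<Rightarrow> nat \<Rightarrow> nat" where
  "fcompl \<xi> n = card (factors \<xi> n)"

end

theory Submission imports Defs begin

lemma Pq_prefix_concat:
  assumes "set s \<subseteq> Pq q" shows "prefix q (concat s @ q)"
  using assms
proof (induction s)
  case Nil then show ?case by simp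
next
  case (Cons v s)
  then have h1: "prefix q (concat s @ q)" by simp
  from Cons.prems have "strict_prefix q (v @ q)" by (simp add: Pq_def)
  then have h2: "prefix q (v @ q)" by simp
  have "prefix (v @ q) (v @ concat s @ q)" using h1 by simp
  then show ?case using h2 by (simp add: prefix_order.trans[OF h2])
qed

lemma Pq_split:
  assumes u: "u \<in> Pq q" and w: "w \<in> Pq q" and lt: "length u < length w"
    and eq: "u @ Y = w @ Z" and Y: "prefix q (Y @ q)" and Z: "prefix q (Z @ q)"
  shows "w \<notin> root_Pq q"
proof
  assume wr: "w \<in> root_Pq q"
  define w' where "w' = drop (length u) w"
  have wpre: "prefix w (u @ Y)" using eq by simp
  have wu: "w = u @ w'"
  proof -
    have "take (length u) w = u" using wpre lt
      by (metis append_eq_conv_conj eq less_imp_le_nat take_all take_append take_take min_def prefix_def)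
    then show ?thesis unfolding w'_def by (metis append_take_drop_id)
  qed
  have Yeq: "Y = w' @ Z" using eq wu by simp
  have wq: "prefix w q" using w by (simp add: Pq_def)
  have lw': "length w' < length q"
    using prefix_length_le[OF wq] lt u unfolding w'_def by (cases u) (auto simp: Pq_def)
  have ne: "w' \<noteq> []" using wu lt by auto
  have p1: "prefix w' (Y @ q)" using Yeq by simp
  have pq: "prefix w' q" using prefix_length_prefix[OF p1 Y] lw' by simp
  have p2: "prefix (w' @ q) (Y @ q)" using Yeq Z by simp
  have "prefix q (w' @ q)" using prefix_length_prefix[OF Y p2] by simp
  then have sp: "strict_prefix q (w' @ q)" using ne by (auto simp: strict_prefix_def)
  have w'P: "w' \<in> Pq q" using ne pq sp by (simp add: Pq_def)
  have "w \<in> lang_pow_ge2 (Pq q)"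
    unfolding lang_pow_ge2_def using u w'P wu by (intro CollectI exI[of _ "[u, w']"]) auto
  then show False using wr by (simp add: root_Pq_def)
qed

lemma root_sub: "root_Pq q \<subseteq> Pq q" by (auto simp: root_Pq_def)

lemma root_code:
  assumes "set s \<subseteq> root_Pq q" "set t \<subseteq> root_Pq q" "concat s = concat t"
  shows "s = t"
  using assms
proof (induction s arbitrary: t)
  case Nil
  then have "concat t = []" by simp
  moreover have "[] \<notin> set t" using Nil.prems(2) by (auto simp: root_Pq_def Pq_def)
  ultimately show ?case by (cases t) auto
next
  case (Cons u s)
  have ue: "u \<noteq> []" using Cons.prems(1) by (auto simp: root_Pq_def Pq_def)
  obtain w t' where t: "t = w # t'" using Cons.prems ue by (cases t) auto
  have uP: "u \<in> Pq q" and wP: "w \<in> Pq q" and ur: "u \<in> root_Pq q" and wr: "w \<in> root_Pq q"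
    using Cons.prems t root_sub by auto
  have Y: "prefix q (concat s @ q)" using Cons.prems(1) root_sub by (intro Pq_prefix_concat) auto
  have Z: "prefix q (concat t' @ q)" using Cons.prems(2) t root_sub by (intro Pq_prefix_concat) auto
  have eq: "u @ concat s = w @ concat t'" using Cons.prems(3) t by simp
  have "\<not> length u < length w" using Pq_split[OF uP wP _ eq Y Z] wr by blast
  moreover have "\<not> length w < length u" using Pq_split[OF wP uP _ eq[symmetric] Z Y] ur by blast
  ultimately have "length u = length w" by simp
  then have "u = w" "concat s = concat t'" using eq by (auto simp: append_eq_append_conv)
  then show ?case using Cons t by simp
qed


definition stops :: "'a list set \<Rightarrow> nat \<Rightarrow> 'a list list set" where
"stops R n = {s. set s \<subseteq> R \<and> ((s = [] \<and> n = 0) \<or>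
   (s \<noteq> [] \<and> n \<le> length (concat s) \<and> length (concat (butlast s)) < n))}"

lemma length_le_concat: "[] \<notin> set xs \<Longrightarrow> length xs \<le> length (concat xs)"
proof (induction xs)
  case (Cons a xs) then show ?case by (cases a) auto
qed simp

lemma stops_0: "stops R 0 = {[]}" by (auto simp: stops_def)

lemma stops_finite:
  assumes "finite R" "[] \<notin> R" shows "finite (stops R n)"
proof -
  have "stops R n \<subseteq> {s. set s \<subseteq> R \<and> length s \<le> n}"
  proof
    fix s assume s: "s \<in> stops R n"
    show "s \<in> {s. set s \<subseteq> R \<and> length s \<le> n}"
    proof (cases "s = []")
      case False
      have "[] \<notin> set (butlast s)" using s assms(2) by (auto simp: stops_def dest: in_set_butlastD)
      then have "length (butlast s) \<le> length (concat (butlast s))" by (rule length_le_concat)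
      then show ?thesis using s False by (auto simp: stops_def)
    qed (use s in \<open>auto simp: stops_def\<close>)
  qed
  then show ?thesis using finite_lists_length_le[OF assms(1)] by (rule finite_subset)
qed

lemma stops_rec:
  assumes "[] \<notin> R" "n > 0"
  shows "stops R n = (\<Union>v\<in>R. Cons v ` stops R (n - length v))"
proof
  show "stops R n \<subseteq> (\<Union>v\<in>R. Cons v ` stops R (n - length v))"
  proof
    fix s assume s: "s \<in> stops R n"
    then obtain v s' where sv: "s = v # s'" using assms by (cases s) (auto simp: stops_def)
    have vR: "v \<in> R" using s sv by (auto simp: stops_def)
    have "s' \<in> stops R (n - length v)"
    proof (cases "s' = []")
      case True then show ?thesis using s sv by (auto simp: stops_def)
    next
      case False
      then have "butlast (v # s') = v # butlast s'" by simp
      then show ?thesis using s sv False by (auto simp: stops_def)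
    qed
    then show "s \<in> (\<Union>v\<in>R. Cons v ` stops R (n - length v))" using vR sv by blast
  qed
next
  show "(\<Union>v\<in>R. Cons v ` stops R (n - length v)) \<subseteq> stops R n"
  proof
    fix s assume "s \<in> (\<Union>v\<in>R. Cons v ` stops R (n - length v))"
    then obtain v s' where vR: "v \<in> R" and s': "s' \<in> stops R (n - length v)" and sv: "s = v # s'"
      by blast
    show "s \<in> stops R n"
    proof (cases "s' = []")
      case True then show ?thesis using s' sv vR assms by (auto simp: stops_def)
    next
      case False
      then have "butlast (v # s') = v # butlast s'" by simp
      then show ?thesis using s' sv vR False by (auto simp: stops_def)
    qed
  qed
qed

lemma stops_weight:
  fixes mu :: real
  assumes fin: "finite R" and ne: "[] \<notin> R" and w: "(\<Sum>v\<in>R. mu ^ length v) = 1"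
  shows "(\<Sum>s\<in>stops R n. mu ^ length (concat s)) = 1"
proof (induction n rule: less_induct)
  case (less n)
  show ?case
  proof (cases "n = 0")
    case True then show ?thesis by (simp add: stops_0)
  next
    case False
    have "(\<Sum>s\<in>stops R n. mu ^ length (concat s))
       = (\<Sum>v\<in>R. \<Sum>s\<in>Cons v ` stops R (n - length v). mu ^ length (concat s))"
      using stops_rec[OF ne, of n] False
      apply (simp only:)
      apply (subst sum.UNION_disjoint)
      apply (auto simp: fin stops_finite[OF fin ne])
      done
    also have "\<dots> = (\<Sum>v\<in>R. \<Sum>s\<in>stops R (n - length v). mu ^ length v * mu ^ length (concat s))"
      by (subst sum.reindex) (auto simp: power_add)
    also have "\<dots> = (\<Sum>v\<in>R. mu ^ length v)"
    proof (rule sum.cong[OF refl])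
      fix v assume "v \<in> R"
      then have "n - length v < n" using ne False by (cases v) auto
      then show "(\<Sum>s\<in>stops R (n - length v). mu ^ length v * mu ^ length (concat s)) = mu ^ length v"
        using less by (simp add: sum_distrib_left[symmetric])
    qed
    finally show ?thesis using w by simp
  qed
qed

definition flat :: "(nat \<Rightarrow> 'b list) \<Rightarrow> nat \<Rightarrow> 'b" where
  "flat F i = concat (map F [0..<Suc i]) ! i"

lemma flat_len: "\<forall>i. F i \<noteq> [] \<Longrightarrow> k \<le> length (concat (map F [0..<k]))"
proof (induction k)
  case (Suc k)
  have "F k \<noteq> []" using Suc.prems by simp
  then have "length (F k) \<ge> 1" by (cases "F k") auto
  then show ?case using Suc by simp
qed simp

lemma concat_upt_split: "a \<le> b \<Longrightarrow> concat (map F [0..<b]) = concat (map F [0..<a]) @ concat (map F [a..<b])"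
  using upt_add_eq_append[of 0 a "b - a"] by simp

lemma flat_nth:
  assumes "\<forall>i. F i \<noteq> []" "i < length (concat (map F [0..<k]))"
  shows "flat F i = concat (map F [0..<k]) ! i"
proof (cases "k \<le> Suc i")
  case True
  have "flat F i = (concat (map F [0..<k]) @ concat (map F [k..<Suc i])) ! i"
    unfolding flat_def using concat_upt_split[OF True, of F] by metis
  then show ?thesis using assms(2) by (simp add: nth_append)
next
  case False
  then have le: "Suc i \<le> k" by simp
  have il: "i < length (concat (map F [0..<Suc i]))" using flat_len[OF assms(1), of "Suc i"] by simp
  have "concat (map F [0..<k]) ! i = (concat (map F [0..<Suc i]) @ concat (map F [Suc i..<k])) ! i"
    using concat_upt_split[OF le, of F] by metis
  then show ?thesis using il unfolding flat_def by (metis nth_append)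
qed

lemma flat_map:
  assumes "\<forall>i. F i \<noteq> []" "m \<le> length (concat (map F [0..<k]))"
  shows "map (flat F) [0..<m] = take m (concat (map F [0..<k]))"
  by (rule nth_equalityI) (use assms in \<open>auto simp: flat_nth\<close>)

lemma flat_range:
  assumes "\<forall>i. F i \<noteq> []" "b \<le> e"
  shows "map (flat F) [length (concat (map F [0..<b]))..<length (concat (map F [0..<e]))]
     = concat (map F [b..<e])"
proof -
  define P where "P = concat (map F [0..<b])"
  define C where "C = concat (map F [b..<e])"
  have E: "concat (map F [0..<e]) = P @ C" using concat_upt_split[OF assms(2)] by (simp add: P_def C_def)
  have "map (flat F) [0..<length (P @ C)] = P @ C"
    using flat_map[OF assms(1), of "length (P @ C)" e] E by simp
  moreover have "[0..<length (P @ C)] = [0..<length P] @ [length P..<length (P @ C)]"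
    using upt_add_eq_append[of 0 "length P" "length C"] by simp
  ultimately have "map (flat F) [0..<length P] @ map (flat F) [length P..<length (P @ C)] = P @ C"
    by simp
  then have "map (flat F) [length P..<length (P @ C)] = C"
    by (subst (asm) append_eq_append_conv) auto
  then show ?thesis using E by (simp add: P_def C_def)
qed

lemma flat_in:
  assumes "\<forall>i. F i \<noteq> []" "\<forall>j. set (F j) \<subseteq> A" shows "flat F i \<in> A"
proof -
  have "i < length (concat (map F [0..<Suc i]))" using flat_len[OF assms(1), of "Suc i"] by simp
  then have "flat F i \<in> set (concat (map F [0..<Suc i]))" unfolding flat_def by (rule nth_mem)
  then show ?thesis using assms(2) by auto
qed


lemma factor_take:
  assumes "map \<xi> [B..<B + length w] = w" "k \<le> length w"
  shows "take k w \<in> factors \<xi> k"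
proof -
  have "take k w = map \<xi> [B..<B + k]"
    using assms by (metis take_map take_upt add_le_cancel_left)
  then show ?thesis unfolding factors_def by blast
qed

theorem lemma7:
  fixes q :: "'a::finite list" and lam :: real
  assumes "card (UNIV :: 'a set) \<ge> 2"
    and "q \<noteq> []"
    and "lam > 0" and "char_poly_q q lam = 0"
    and "\<forall>t>0. char_poly_q q t = 0 \<longrightarrow> t \<le> lam"
  shows "\<exists>c>0. \<exists>\<xi>\<in>omega_lang (Pq q). \<forall>n. real (fcompl \<xi> n) \<ge> c * lam ^ n"
proof -
  define R where "R = root_Pq q"
  have RP: "R \<subseteq> Pq q" unfolding R_def by (rule root_sub)
  have Rfin: "finite R"
    by (rule finite_subset[of _ "set (prefixes q)"]) (use RP in \<open>auto simp: Pq_def\<close>)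
  have Rne: "[] \<notin> R" using RP by (auto simp: Pq_def)
  have Rlen: "\<And>v. v \<in> R \<Longrightarrow> length v \<le> length q"
    using RP by (auto simp: Pq_def dest: prefix_length_le)
  have qP: "q \<in> Pq q" using assms(2) by (auto simp: Pq_def strict_prefix_def)
  define mu where "mu = 1 / lam"
  have mupos: "mu > 0" using assms(3) by (simp add: mu_def)
  have mulam: "\<And>k. mu ^ k * lam ^ k = 1"
    using assms(3) by (simp add: mu_def power_one_over)
  have wsum: "(\<Sum>v\<in>R. mu ^ length v) = 1"
  proof -
    have eq: "lam ^ length q = (\<Sum>v\<in>R. lam ^ (length q - length v))"
      using assms(4) by (simp add: char_poly_q_def R_def)
    have "(\<Sum>v\<in>R. mu ^ length v) = (\<Sum>v\<in>R. mu ^ length q * lam ^ (length q - length v))"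
    proof (rule sum.cong[OF refl])
      fix v assume v: "v \<in> R"
      have "mu ^ length q = mu ^ length v * mu ^ (length q - length v)"
        using Rlen[OF v] by (simp add: power_add[symmetric])
      then show "mu ^ length v = mu ^ length q * lam ^ (length q - length v)"
        using mulam[of "length q - length v"] by (simp add: mult.assoc)
    qed
    also have "\<dots> = mu ^ length q * lam ^ length q" using eq by (simp add: sum_distrib_left)
    finally show ?thesis using mulam by simp
  qed
  define ls where "ls m = (SOME xs. set xs = stops R m)" for m
  have ls: "set (ls m) = stops R m" for m
    unfolding ls_def using finite_list[OF stops_finite[OF Rfin Rne]] by (rule someI_ex)
  define F where "F m = q # concat (ls m)" for m
  have Fne: "\<forall>i. F i \<noteq> []" by (simp add: F_def)
  have FP: "\<forall>j. set (F j) \<subseteq> Pq q"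
    using qP RP ls by (auto simp: F_def stops_def)
  define ws where "ws = flat F"
  have wsP: "\<forall>j. ws j \<in> Pq q - {[]}" using flat_in[OF Fne FP] unfolding ws_def by (auto simp: Pq_def)
  have wsne: "\<forall>i. ws i \<noteq> []" using wsP by auto
  define \<xi> where "\<xi> = flat ws"
  have omega: "\<xi> \<in> omega_lang (Pq q)"
    unfolding omega_lang_def
  proof (intro CollectI exI conjI allI)
    show "ws i \<in> Pq q - {[]}" for i using wsP by blast
    show "oprefix (concat (map ws [0..<n])) \<xi>" for n
      unfolding oprefix_def \<xi>_def using flat_nth[OF wsne, of _ n] by simp
  qed
  have fact: "take k (concat s) \<in> factors \<xi> k" if s: "s \<in> stops R m" and k: "k \<le> length (concat s)"
    for s m k
  proof -
    obtain ys zs where lsm: "ls m = ys @ s # zs" using s ls split_list by metis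
    have Fm: "F m = (q # concat ys) @ s @ concat zs" by (simp add: F_def lsm)
    define a where "a = length (concat (map F [0..<m]))"
    have a': "length (concat (map F [0..<Suc m])) = a + length (F m)"
      by (simp add: a_def)
    have blk: "map ws [a..<a + length (F m)] = F m"
      using flat_range[OF Fne, of m "Suc m"] a' unfolding ws_def a_def by simp
    define p where "p = Suc (length (concat ys))"
    define b where "b = a + p"
    have wsb: "map ws [b..<b + length s] = s"
    proof (rule nth_equalityI)
      fix j assume "j < length (map ws [b..<b + length s])"
      then have j: "j < length s" by simp
      have pj: "p + j < length (F m)" using j Fm by (simp add: p_def)
      have "ws (b + j) = map ws [a..<a + length (F m)] ! (p + j)"
        using pj by (simp add: b_def add.assoc)
      also have "\<dots> = F m ! (p + j)" using blk by simp
      also have "\<dots> = s ! j" using Fm j by (simp add: p_def nth_append)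
      finally show "map ws [b..<b + length s] ! j = s ! j" using j by simp
    qed simp
    define B where "B = length (concat (map ws [0..<b]))"
    have E: "length (concat (map ws [0..<b + length s])) = B + length (concat s)"
      using concat_upt_split[of b "b + length s" ws] wsb by (simp add: B_def)
    have "map \<xi> [B..<B + length (concat s)] = concat s"
      using flat_range[OF wsne, of b "b + length s"] E wsb unfolding \<xi>_def B_def by simp
    then show ?thesis using k by (rule factor_take)
  qed
  define Z where "Z = {z :: 'a list. set z \<subseteq> UNIV \<and> length z \<le> length q}"
  have Zfin: "finite Z" unfolding Z_def by (rule finite_lists_length_le) simp
  have "[] \<in> Z" by (simp add: Z_def)
  then have Zpos: "card Z \<ge> 1" using Zfin card_gt_0_iff[of Z] by (cases "card Z") auto
  have bound: "lam ^ n \<le> real (fcompl \<xi> n) * card Z" for n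
  proof -
    have ffin: "finite (factors \<xi> n)"
      by (rule finite_subset[OF _ finite_lists_length_le[of UNIV n]]) (auto simp: factors_def)
    have fpos: "fcompl \<xi> n \<ge> 1"
    proof -
      have "map \<xi> [0..<0+n] \<in> factors \<xi> n" unfolding factors_def by blast
      then have "factors \<xi> n \<noteq> {}" by blast
      then show ?thesis using ffin card_gt_0_iff[of "factors \<xi> n"] unfolding fcompl_def by linarith
    qed
    define S where "S = stops R n"
    define W where "W = concat ` S"
    define Pre where "Pre = take n ` W"
    have Sfin: "finite S" unfolding S_def by (rule stops_finite[OF Rfin Rne])
    have cW: "card W = card S"
      unfolding W_def
    proof (rule card_image, rule inj_onI)
      fix s t assume "s \<in> S" "t \<in> S" "concat s = concat t"
      then show "s = t" using root_code[of s q t] by (auto simp: S_def stops_def R_def)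
    qed
    have PreF: "Pre \<subseteq> factors \<xi> n"
    proof
      fix x assume "x \<in> Pre"
      then obtain s where s: "s \<in> S" and x: "x = take n (concat s)" by (auto simp: Pre_def W_def)
      have "n \<le> length (concat s)" using s by (auto simp: S_def stops_def)
      then show "x \<in> factors \<xi> n" using fact[of s n n] s x by (simp add: S_def)
    qed
    have WPZ: "W \<subseteq> (\<lambda>(p, z). p @ z) ` (Pre \<times> Z)"
    proof
      fix w assume "w \<in> W"
      then obtain s where s: "s \<in> S" and w: "w = concat s" by (auto simp: W_def)
      have "length w \<le> n + length q"
      proof (cases "s = []")
        case False
        have "concat s = concat (butlast s) @ last s"
          using False by (metis append_butlast_last_id concat_append concat.simps append_Nil2)
        moreover have "last s \<in> R" using False s by (auto simp: S_def stops_def)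
        moreover have "length (concat (butlast s)) < n" using s False by (simp add: S_def stops_def)
        ultimately show ?thesis using Rlen[of "last s"] w by simp
      qed (use w in simp)
      then have "drop n w \<in> Z" by (simp add: Z_def)
      moreover have "take n w \<in> Pre" using \<open>w \<in> W\<close> by (simp add: Pre_def)
      ultimately show "w \<in> (\<lambda>(p, z). p @ z) ` (Pre \<times> Z)"
        by (intro image_eqI[of _ _ "(take n w, drop n w)"]) auto
    qed
    have PreFin: "finite Pre" using Sfin by (simp add: Pre_def W_def)
    have fPZ: "finite (Pre \<times> Z)" using PreFin Zfin by simp
    have "card W \<le> card ((\<lambda>(p, z). p @ z) ` (Pre \<times> Z))"
      by (rule card_mono[OF _ WPZ]) (use fPZ in simp)
    also have "\<dots> \<le> card (Pre \<times> Z)" by (rule card_image_le[OF fPZ])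
    finally have "card S \<le> card (Pre \<times> Z)" using cW by simp
    also have "\<dots> \<le> fcompl \<xi> n * card Z"
      using card_mono[OF ffin PreF] by (simp add: fcompl_def card_cartesian_product)
    finally have cS: "card S \<le> fcompl \<xi> n * card Z" .
    show ?thesis
    proof (cases "lam \<ge> 1")
      case True
      have mu1: "mu \<le> 1" using True by (simp add: mu_def)
      have "1 = (\<Sum>s\<in>S. mu ^ length (concat s))"
        using stops_weight[OF Rfin Rne wsum] by (simp add: S_def)
      also have "\<dots> \<le> (\<Sum>s\<in>S. mu ^ n)"
      proof (rule sum_mono)
        fix s assume "s \<in> S"
        then have "n \<le> length (concat s)" by (auto simp: S_def stops_def)
        then show "mu ^ length (concat s) \<le> mu ^ n"
          using mu1 mupos by (simp add: power_decreasing)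
      qed
      also have "\<dots> = card S * mu ^ n" by simp
      finally have "lam ^ n \<le> card S * mu ^ n * lam ^ n"
        using assms(3) by simp
      also have "\<dots> = card S" using mulam[of n] by (simp add: mult.assoc)
      also have "\<dots> \<le> real (fcompl \<xi> n * card Z)" using cS by linarith
      finally show ?thesis by simp
    next
      case False
      then have "lam ^ n \<le> 1" using assms(3) by (simp add: power_le_one)
      also have "1 \<le> real (fcompl \<xi> n * card Z)"
      proof -
        have "1 * 1 \<le> fcompl \<xi> n * card Z" using fpos Zpos by (rule mult_le_mono)
        then have "(1::nat) \<le> fcompl \<xi> n * card Z" by simp
        then show ?thesis by (simp only: of_nat_le_iff[symmetric] of_nat_1)
      qed
      finally show ?thesis by simp
    qed
  qed
  show ?thesis
  proof (intro exI conjI bexI allI)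
    show "(0::real) < 1 / card Z" using Zpos by simp
    show "\<xi> \<in> omega_lang (Pq q)" by (rule omega)
    fix n
    show "1 / real (card Z) * lam ^ n \<le> real (fcompl \<xi> n)"
      using bound[of n] Zpos by (simp add: field_simps)
  qed
qed

end
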